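(* Let $\mathbb F$ be any field. The problem of classifying two-dimensional vector subspaces $V\subset \mathbb F^{n\times n}$ ($n=1,2,\dots$) consisting of pairwise commuting matrices, up to similarity $V\mapsto S^{-1}VS:=\{S^{-1}AS\mid A\in V\}$ with nonsingular $S\in\mathbb F^{n\times n}$, is wild. Moreover, if $\mathbb F$ is not the field with two elements, then the problem of classifying, up to the same similarity, those two-dimensional vector spaces of commuting $n\times n$ matrices over $\mathbb F$ that contain a nonsingular matrix is also wild.
   Context: Two pairs $(M,N)$, $(M',N')$ of $n\times n$ matrices over $\mathbb F$ are similar if $(S^{-1}MS,S^{-1}NS)=(M',N')$ for some nonsingular $S$. A matrix classification problem $\mathcal M$ is given by a set $\mathcal M_1$ of tuples of matrices over $\mathbb F$ and a set $\mathcal M_2$ of admissible transformations on them. It is called wild if there is a tuple $M(x,y)=(M_1(x,y),\dots,M_t(x,y))$ of matrices whose entries are noncommutative polynomials in $x,y$ over $\mathbb F$ such that (i) $M(A,B)\in\mathcal M_1$ for all $A,B\in\mathbb F^{n\times n}$ and all $n\ge1$ (each scalar entry $\alpha$ being replaced by $\alpha I_n$), and (ii) $M(A,B)$ can be carried to $M(A',B')$ by transformations from $\mathcal M_2$ if and only if the pairs $(A,B)$ and $(A',B')$ are similar. (A two-dimensional space of matrices is represented by a basis $(A,B)$, determined up to change of basis.) *)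

theory Defs
  imports "Jordan_Normal_Form.Matrix"
begin

datatype 'a ncpoly = NCConst 'a | NCX | NCY
  | NCAdd "'a ncpoly" "'a ncpoly" | NCMul "'a ncpoly" "'a ncpoly"

fun nc_eval :: "nat \<Rightarrow> 'a::field ncpoly \<Rightarrow> 'a mat \<Rightarrow> 'a mat \<Rightarrow> 'a mat" where
  "nc_eval n (NCConst c) A B = c \<cdot>\<^sub>m 1\<^sub>m n"
| "nc_eval n NCX A B = A"
| "nc_eval n NCY A B = B"
| "nc_eval n (NCAdd p q) A B = nc_eval n p A B + nc_eval n q A B"
| "nc_eval n (NCMul p q) A B = nc_eval n p A B * nc_eval n q A B"

text \<open>Substituting n x n matrices A, B into a k x k matrix of noncommutative
 polynomials gives the (k n) x (k n) block matrix.\<close>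
definition nc_subst :: "nat \<Rightarrow> 'a::field ncpoly mat \<Rightarrow> 'a mat \<Rightarrow> 'a mat \<Rightarrow> 'a mat" where
  "nc_subst n M A B = mat (dim_row M * n) (dim_col M * n)
     (\<lambda>(i, j). nc_eval n (M $$ (i div n, j div n)) A B $$ (i mod n, j mod n))"

definition similar_pairs :: "nat \<Rightarrow> 'a::field mat \<Rightarrow> 'a mat \<Rightarrow> 'a mat \<Rightarrow> 'a mat \<Rightarrow> bool" where
  "similar_pairs n A B A' B' \<longleftrightarrow>
     (\<exists>S T. S \<in> carrier_mat n n \<and> T \<in> carrier_mat n n \<and> S * T = 1\<^sub>m n \<and> T * S = 1\<^sub>m n
        \<and> T * A * S = A' \<and> T * B * S = B')"

definition span2 :: "'a::field mat \<Rightarrow> 'a mat \<Rightarrow> 'a mat set" where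
  "span2 P Q = {a \<cdot>\<^sub>m P + b \<cdot>\<^sub>m Q | a b. True}"

definition similar_spaces :: "'a::field mat \<Rightarrow> 'a mat \<Rightarrow> 'a mat \<Rightarrow> 'a mat \<Rightarrow> bool" where
  "similar_spaces P Q P' Q' \<longleftrightarrow>
     (\<exists>N S T. S \<in> carrier_mat N N \<and> T \<in> carrier_mat N N \<and> S * T = 1\<^sub>m N \<and> T * S = 1\<^sub>m N
        \<and> P \<in> carrier_mat N N \<and> Q \<in> carrier_mat N N
        \<and> P' \<in> carrier_mat N N \<and> Q' \<in> carrier_mat N N
        \<and> (\<lambda>X. T * X * S) ` span2 P Q = span2 P' Q')"

definition comm_2space :: "'a::field mat \<Rightarrow> 'a mat \<Rightarrow> bool" where
  "comm_2space P Q \<longleftrightarrow> (\<exists>N. P \<in> carrier_mat N N \<and> Q \<in> carrier_mat N N \<and>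
     P * Q = Q * P \<and>
     (\<forall>a b. a \<cdot>\<^sub>m P + b \<cdot>\<^sub>m Q = 0\<^sub>m N N \<longrightarrow> a = 0 \<and> b = 0))"

definition comm_2space_nonsing :: "'a::field mat \<Rightarrow> 'a mat \<Rightarrow> bool" where
  "comm_2space_nonsing P Q \<longleftrightarrow> comm_2space P Q \<and>
     (\<exists>X \<in> span2 P Q. invertible_mat X)"

definition wild_2space_problem :: "('a::field mat \<Rightarrow> 'a mat \<Rightarrow> bool) \<Rightarrow> bool" where
  "wild_2space_problem Obj \<longleftrightarrow>
    (\<exists>k M1 M2. M1 \<in> carrier_mat k k \<and> M2 \<in> carrier_mat k k \<and>
      (\<forall>n\<ge>1. \<forall>A \<in> carrier_mat n n. \<forall>B \<in> carrier_mat n n.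
          Obj (nc_subst n M1 A B) (nc_subst n M2 A B)) \<and>
      (\<forall>n\<ge>1. \<forall>A \<in> carrier_mat n n. \<forall>B \<in> carrier_mat n n.
         \<forall>A' \<in> carrier_mat n n. \<forall>B' \<in> carrier_mat n n.
          similar_spaces (nc_subst n M1 A B) (nc_subst n M2 A B)
                         (nc_subst n M1 A' B') (nc_subst n M2 A' B')
          \<longleftrightarrow> similar_pairs n A B A' B'))"

end

theory Submission
  imports Defs "Jordan_Normal_Form.Determinant"
begin

definition Ei :: "nat \<Rightarrow> nat \<Rightarrow> nat \<Rightarrow> 'a::field mat" where
  "Ei k n g = mat (k*n) n (\<lambda>(x,y). if x = g*n + y then 1 else 0)"
definition Ri :: "nat \<Rightarrow> nat \<Rightarrow> nat \<Rightarrow> 'a::field mat" where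
  "Ri k n g = mat n (k*n) (\<lambda>(x,y). if y = g*n + x then 1 else 0)"

lemma Ei_carrier[simp]: "Ei k n g \<in> carrier_mat (k*n) n" by (simp add: Ei_def)
lemma Ri_carrier[simp]: "Ri k n g \<in> carrier_mat n (k*n)" by (simp add: Ri_def)
lemma Ei_dims[simp]: "dim_row (Ei k n g) = k*n" "dim_col (Ei k n g) = n" by (simp_all add: Ei_def)
lemma Ri_dims[simp]: "dim_row (Ri k n g) = n" "dim_col (Ri k n g) = k*n" by (simp_all add: Ri_def)

lemma idx_le: "g < k \<Longrightarrow> y < n \<Longrightarrow> g*n + y < k*(n::nat)"
proof -
  assume "g < k" "y < n"
  hence "g*n + y < g*n + n" by simp
  also have "\<dots> = (g+1)*n" by simp
  also have "\<dots> \<le> k*n" using \<open>g<k\<close> by (intro mult_right_mono) auto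
  finally show ?thesis .
qed

lemma mult_Ei_idx:
  assumes M: "M \<in> carrier_mat m (k*n)" and g: "g < k" and x: "x < m" and y: "y < n"
  shows "(M * Ei k n g) $$ (x,y) = (M $$ (x, g*n+y) :: 'a::field)"
proof -
  have c: "g*n+y < k*n" using idx_le[OF g y] .
  have "(M * Ei k n g) $$ (x,y) = (\<Sum>z\<in>{0..<k*n}. M $$ (x,z) * (if z = g*n+y then 1 else 0))"
    using M x y by (simp add: Ei_def scalar_prod_def)
  also have "\<dots> = (\<Sum>z\<in>{0..<k*n}. if z = g*n+y then M $$ (x,z) else 0)"
    by (rule sum.cong) auto
  also have "\<dots> = M $$ (x, g*n+y)" using c by simp
  finally show ?thesis .
qed

lemma Ri_mult_idx:
  assumes M: "M \<in> carrier_mat (k*n) m" and g: "g < k" and x: "x < n" and y: "y < m"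
  shows "(Ri k n g * M) $$ (x,y) = (M $$ (g*n+x, y) :: 'a::field)"
proof -
  have c: "g*n+x < k*n" using idx_le[OF g x] .
  have "(Ri k n g * M) $$ (x,y) = (\<Sum>z\<in>{0..<k*n}. (if z = g*n+x then 1 else 0) * M $$ (z,y))"
    using M x y by (simp add: Ri_def scalar_prod_def)
  also have "\<dots> = (\<Sum>z\<in>{0..<k*n}. if z = g*n+x then M $$ (z,y) else 0)"
    by (rule sum.cong) auto
  also have "\<dots> = M $$ (g*n+x, y)" using c by simp
  finally show ?thesis .
qed

lemma Ri_Ei: assumes "g < k" "h < k"
  shows "Ri k n g * Ei k n h = (if g = h then 1\<^sub>m n else (0\<^sub>m n n :: 'a::field mat))"
proof (rule eq_matI)
  fix x y assume x: "x < dim_row (if g = h then 1\<^sub>m n else (0\<^sub>m n n :: 'a mat))"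
    and y: "y < dim_col (if g = h then 1\<^sub>m n else (0\<^sub>m n n :: 'a mat))"
  hence x: "x < n" and y: "y < n" by (auto split: if_splits)
  have "(Ri k n g * Ei k n h) $$ (x,y) = Ei k n h $$ (g*n+x, y)"
    by (rule Ri_mult_idx[OF _ assms(1) x y]) simp
  also have "\<dots> = (if g*n+x = h*n+y then 1 else 0)"
    using idx_le[OF assms(1) x] y by (simp add: Ei_def)
  also have "\<dots> = (if g = h \<and> x = y then 1 else 0)"
  proof -
    have "(g*n+x = h*n+y) = (g = h \<and> x = y)"
    proof
      assume e: "g*n+x = h*n+y"
      hence "(g*n+x) div n = (h*n+y) div n" "(g*n+x) mod n = (h*n+y) mod n" by simp_all
      thus "g = h \<and> x = y" using x y by simp
    qed auto
    thus ?thesis by simp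
  qed
  finally show "(Ri k n g * Ei k n h) $$ (x,y) = (if g = h then 1\<^sub>m n else (0\<^sub>m n n :: 'a mat)) $$ (x,y)"
    using x y by auto
qed auto

lemma Ei_mult_idx:
  assumes X: "X \<in> carrier_mat n m" and x: "x < k*n" and y: "y < m"
  shows "(Ei k n i * X) $$ (x,y) = (if x div n = i then X $$ (x mod n, y) else (0::'a::field))"
proof -
  have n: "0 < n" using x by (cases n) auto
  have "(Ei k n i * X) $$ (x,y) = (\<Sum>z\<in>{0..<n}. (if x = i*n+z then 1 else 0) * X $$ (z,y))"
    using X x y by (simp add: Ei_def scalar_prod_def)
  also have "\<dots> = (\<Sum>z\<in>{0..<n}. if z = x mod n \<and> x div n = i then X $$ (z,y) else 0)"
  proof (rule sum.cong)
    fix z assume z: "z \<in> {0..<n}"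
    have "(x = i*n+z) = (z = x mod n \<and> x div n = i)"
    proof
      assume "x = i*n+z" thus "z = x mod n \<and> x div n = i" using z by simp
    next
      assume "z = x mod n \<and> x div n = i" thus "x = i*n+z" by (metis div_mult_mod_eq mult.commute)
    qed
    thus "(if x = i*n+z then 1 else 0) * X $$ (z,y) = (if z = x mod n \<and> x div n = i then X $$ (z,y) else 0)"
      by simp
  qed simp
  also have "\<dots> = (if x div n = i then X $$ (x mod n, y) else 0)"
    using n by (cases "x div n = i") auto
  finally show ?thesis .
qed

lemma col_ext:
  assumes M: "M \<in> carrier_mat m (k*n)" and M': "M' \<in> carrier_mat m (k*n)"
    and h: "\<And>g. g < k \<Longrightarrow> M * Ei k n g = M' * Ei k n g"
  shows "M = (M' :: 'a::field mat)"
proof (rule eq_matI)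
  fix x y assume x: "x < dim_row M'" and y: "y < dim_col M'"
  hence x: "x < m" and y: "y < k*n" using M' by auto
  have n: "0 < n" using y by (cases n) auto
  define g where "g = y div n"
  have g: "g < k" using y n unfolding g_def by (simp add: less_mult_imp_div_less)
  have ym: "y mod n < n" using n by simp
  have yy: "g*n + y mod n = y" unfolding g_def by (metis div_mult_mod_eq)
  have "M $$ (x,y) = (M * Ei k n g) $$ (x, y mod n)" using mult_Ei_idx[OF M g x ym] yy by simp
  also have "\<dots> = (M' * Ei k n g) $$ (x, y mod n)" using h[OF g] by simp
  also have "\<dots> = M' $$ (x,y)" using mult_Ei_idx[OF M' g x ym] yy by simp
  finally show "M $$ (x,y) = M' $$ (x,y)" .
qed (insert M M', auto)

lemma nc_eval_carrier:
  assumes "A \<in> carrier_mat n n" "B \<in> carrier_mat n n"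
  shows "nc_eval n p A B \<in> carrier_mat n n"
  using assms by (induction p) auto

lemma nc_subst_dims[simp]: "dim_row (nc_subst n M A B) = dim_row M * n" "dim_col (nc_subst n M A B) = dim_col M * n"
  by (simp_all add: nc_subst_def)

lemma nc_subst_carrier[simp]:
  "M \<in> carrier_mat k k \<Longrightarrow> nc_subst n M A B \<in> carrier_mat (k*n) (k*n)"
  by (simp add: nc_subst_def)

lemma nc_subst_col:
  assumes M: "M \<in> carrier_mat k k" and A: "A \<in> carrier_mat n n" and B: "B \<in> carrier_mat n n"
    and g: "g < k" and x: "x < k*n" and y: "y < n"
  shows "(nc_subst n M A B * Ei k n g) $$ (x,y) = nc_eval n (M $$ (x div n, g)) A B $$ (x mod n, y)"
proof -
  have n: "0 < n" using y by auto
  have "(nc_subst n M A B * Ei k n g) $$ (x,y) = nc_subst n M A B $$ (x, g*n+y)"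
    by (rule mult_Ei_idx[OF nc_subst_carrier[OF M] g x y])
  also have "\<dots> = nc_eval n (M $$ (x div n, g)) A B $$ (x mod n, y)"
    using M x y idx_le[OF g y] by (simp add: nc_subst_def)
  finally show ?thesis .
qed

lemma nc_subst_col_single:
  assumes M: "M \<in> carrier_mat k k" and A: "A \<in> carrier_mat n n" and B: "B \<in> carrier_mat n n"
    and g: "g < k" and i: "i < k"
    and z: "\<And>I. I < k \<Longrightarrow> I \<noteq> i \<Longrightarrow> M $$ (I, g) = NCConst 0"
    and X: "nc_eval n (M $$ (i,g)) A B = X"
  shows "nc_subst n M A B * Ei k n g = Ei k n i * X"
proof -
  have Xc: "X \<in> carrier_mat n n" using nc_eval_carrier[OF A B] X by blast
  show ?thesis
proof (rule eq_matI)
  fix x y assume x: "x < dim_row (Ei k n i * X)" and y: "y < dim_col (Ei k n i * X)"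
  hence x: "x < k*n" and y: "y < n" using Xc by auto
  have n: "0 < n" using y by auto
  have xd: "x div n < k" using x n by (simp add: less_mult_imp_div_less)
  show "(nc_subst n M A B * Ei k n g) $$ (x,y) = (Ei k n i * X) $$ (x,y)"
    unfolding nc_subst_col[OF M A B g x y] Ei_mult_idx[OF Xc x y]
    using z[OF xd] X n y by auto
qed (insert M Xc, auto)
qed

lemma nc_subst_col_zero:
  assumes M: "M \<in> carrier_mat k k" and A: "A \<in> carrier_mat n n" and B: "B \<in> carrier_mat n n"
    and g: "g < k"
    and z: "\<And>I. I < k \<Longrightarrow> M $$ (I, g) = NCConst 0"
  shows "nc_subst n M A B * Ei k n g = 0\<^sub>m (k*n) n"
proof (rule eq_matI)
  fix x y assume x: "x < dim_row (0\<^sub>m (k*n) n :: 'a mat)" and y: "y < dim_col (0\<^sub>m (k*n) n :: 'a mat)"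
  hence x: "x < k*n" and y: "y < n" by auto
  have n: "0 < n" using y by auto
  have xd: "x div n < k" using x n by (simp add: less_mult_imp_div_less)
  show "(nc_subst n M A B * Ei k n g) $$ (x,y) = (0\<^sub>m (k*n) n :: 'a mat) $$ (x,y)"
    unfolding nc_subst_col[OF M A B g x y] using z[OF xd] n x y by auto
qed (insert M, auto)


definition MP :: "'a::field ncpoly mat" where
  "MP = mat 12 12 (\<lambda>(i,j). if (i,j) \<in> {(4,6),(1,4),(2,5),(0,1),(0,2)} then NCConst 1
      else if (i,j) = (0,3) then NCX else NCConst 0)"
definition MQ :: "'a::field ncpoly mat" where
  "MQ = mat 12 12 (\<lambda>(i,j). if (i,j) \<in> {(5,6),(2,4),(3,5),(0,1),(10,11),(9,10),(8,9),(7,8)} then NCConst 1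
      else if (i,j) = (0,2) then NCX else if (i,j) = (0,3) then NCY else NCConst 0)"
definition M1 :: "'a::field ncpoly mat" where
  "M1 = mat 12 12 (\<lambda>(i,j). if i = j then NCConst 1 else MP $$ (i,j))"

lemma MP_carrier[simp]: "MP \<in> carrier_mat 12 12" by (simp add: MP_def)
lemma MQ_carrier[simp]: "MQ \<in> carrier_mat 12 12" by (simp add: MQ_def)
lemma MPQ_dims[simp]: "dim_row MP = 12" "dim_col MP = 12" "dim_row MQ = 12" "dim_col MQ = 12"
  "dim_row M1 = 12" "dim_col M1 = 12"
  by (simp_all add: MP_def MQ_def M1_def)
lemma M1_carrier[simp]: "M1 \<in> carrier_mat 12 12" by (simp add: M1_def)

context fixes n :: nat and A B :: "'a::field mat"
  assumes A: "A \<in> carrier_mat n n" and B: "B \<in> carrier_mat n n"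
begin

lemma P6: "nc_subst n MP A B * Ei 12 n 6 = Ei 12 n 4 * 1\<^sub>m n" by (rule nc_subst_col_single[OF MP_carrier A B]) (auto simp: MP_def)
lemma P4: "nc_subst n MP A B * Ei 12 n 4 = Ei 12 n 1 * 1\<^sub>m n" by (rule nc_subst_col_single[OF MP_carrier A B]) (auto simp: MP_def)
lemma P5: "nc_subst n MP A B * Ei 12 n 5 = Ei 12 n 2 * 1\<^sub>m n" by (rule nc_subst_col_single[OF MP_carrier A B]) (auto simp: MP_def)
lemma P1: "nc_subst n MP A B * Ei 12 n 1 = Ei 12 n 0 * 1\<^sub>m n" by (rule nc_subst_col_single[OF MP_carrier A B]) (auto simp: MP_def)
lemma P2: "nc_subst n MP A B * Ei 12 n 2 = Ei 12 n 0 * 1\<^sub>m n" by (rule nc_subst_col_single[OF MP_carrier A B]) (auto simp: MP_def)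
lemma P3: "nc_subst n MP A B * Ei 12 n 3 = Ei 12 n 0 * A" by (rule nc_subst_col_single[OF MP_carrier A B]) (auto simp: MP_def)
lemma Pz: "g \<in> {0,7,8,9,10,11} \<Longrightarrow> nc_subst n MP A B * Ei 12 n g = 0\<^sub>m (12*n) n"
  by (rule nc_subst_col_zero[OF MP_carrier A B]) (auto simp: MP_def)

lemma Q6: "nc_subst n MQ A B * Ei 12 n 6 = Ei 12 n 5 * 1\<^sub>m n" by (rule nc_subst_col_single[OF MQ_carrier A B]) (auto simp: MQ_def)
lemma Q4: "nc_subst n MQ A B * Ei 12 n 4 = Ei 12 n 2 * 1\<^sub>m n" by (rule nc_subst_col_single[OF MQ_carrier A B]) (auto simp: MQ_def)
lemma Q5: "nc_subst n MQ A B * Ei 12 n 5 = Ei 12 n 3 * 1\<^sub>m n" by (rule nc_subst_col_single[OF MQ_carrier A B]) (auto simp: MQ_def)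
lemma Q1: "nc_subst n MQ A B * Ei 12 n 1 = Ei 12 n 0 * 1\<^sub>m n" by (rule nc_subst_col_single[OF MQ_carrier A B]) (auto simp: MQ_def)
lemma Q2: "nc_subst n MQ A B * Ei 12 n 2 = Ei 12 n 0 * A" by (rule nc_subst_col_single[OF MQ_carrier A B]) (auto simp: MQ_def)
lemma Q3: "nc_subst n MQ A B * Ei 12 n 3 = Ei 12 n 0 * B" by (rule nc_subst_col_single[OF MQ_carrier A B]) (auto simp: MQ_def)
lemma Q11: "nc_subst n MQ A B * Ei 12 n 11 = Ei 12 n 10 * 1\<^sub>m n" by (rule nc_subst_col_single[OF MQ_carrier A B]) (auto simp: MQ_def)
lemma Q10: "nc_subst n MQ A B * Ei 12 n 10 = Ei 12 n 9 * 1\<^sub>m n" by (rule nc_subst_col_single[OF MQ_carrier A B]) (auto simp: MQ_def)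
lemma Q9: "nc_subst n MQ A B * Ei 12 n 9 = Ei 12 n 8 * 1\<^sub>m n" by (rule nc_subst_col_single[OF MQ_carrier A B]) (auto simp: MQ_def)
lemma Q8: "nc_subst n MQ A B * Ei 12 n 8 = Ei 12 n 7 * 1\<^sub>m n" by (rule nc_subst_col_single[OF MQ_carrier A B]) (auto simp: MQ_def)
lemma Qz: "g \<in> {0,7} \<Longrightarrow> nc_subst n MQ A B * Ei 12 n g = 0\<^sub>m (12*n) n"
  by (rule nc_subst_col_zero[OF MQ_carrier A B]) (auto simp: MQ_def)

lemma P0X: "X \<in> carrier_mat n m \<Longrightarrow> nc_subst n MP A B * (Ei 12 n 0 * X) = 0\<^sub>m (12*n) m"
proof -
  assume X: "X \<in> carrier_mat n m"
  have "nc_subst n MP A B * (Ei 12 n 0 * X) = (nc_subst n MP A B * Ei 12 n 0) * X"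
    by (rule assoc_mult_mat[symmetric, OF nc_subst_carrier[OF MP_carrier] Ei_carrier X])
  thus ?thesis using Pz[of 0] X by simp
qed
lemma Q0X: "X \<in> carrier_mat n m \<Longrightarrow> nc_subst n MQ A B * (Ei 12 n 0 * X) = 0\<^sub>m (12*n) m"
proof -
  assume X: "X \<in> carrier_mat n m"
  have "nc_subst n MQ A B * (Ei 12 n 0 * X) = (nc_subst n MQ A B * Ei 12 n 0) * X"
    by (rule assoc_mult_mat[symmetric, OF nc_subst_carrier[OF MQ_carrier] Ei_carrier X])
  thus ?thesis using Qz[of 0] X by simp
qed

lemmas colPQ = P6 P4 P5 P1 P2 P3 Q6 Q4 Q5 Q1 Q2 Q3 Q11 Q10 Q9 Q8
   Pz[of 0, simplified] Pz[of 7, simplified] Pz[of 8, simplified] Pz[of 9, simplified] Pz[of 10, simplified] Pz[of 11, simplified]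
   Qz[of 0, simplified] Qz[of 7, simplified] P0X Q0X

end

lemma mult_assoc_dims: "dim_col A = dim_row B \<Longrightarrow> dim_col B = dim_row C \<Longrightarrow> A * B * C = A * (B * (C::'a::semiring_0 mat))"
  by (rule assoc_mult_mat[of A "dim_row A" "dim_col A" B "dim_col B" C "dim_col C"]) auto

lemma lt12: "g < (12::nat) \<Longrightarrow> g = 0 \<or> g = 1 \<or> g = 2 \<or> g = 3 \<or> g = 4 \<or> g = 5 \<or> g = 6 \<or> g = 7 \<or> g = 8 \<or> g = 9 \<or> g = 10 \<or> g = 11"
  by presburger

lemma Ri_Ei_mult: assumes "g < k" "h < k" "X \<in> carrier_mat n m"
  shows "Ri k n g * (Ei k n h * X) = (if g = h then X else (0\<^sub>m n m :: 'a::field mat))"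
proof -
  have "Ri k n g * (Ei k n h * X) = (Ri k n g * Ei k n h) * X"
    using assms by (simp add: assoc_mult_mat[symmetric, OF Ri_carrier Ei_carrier assms(3)])
  thus ?thesis using assms by (simp add: Ri_Ei)
qed

context fixes n :: nat and A B :: "'a::field mat"
  assumes A: "A \<in> carrier_mat n n" and B: "B \<in> carrier_mat n n"
begin
abbreviation "PP \<equiv> nc_subst n MP A B"
abbreviation "QQ \<equiv> nc_subst n MQ A B"

lemma PPc[simp]: "PP \<in> carrier_mat (12*n) (12*n)" by simp
lemma QQc[simp]: "QQ \<in> carrier_mat (12*n) (12*n)" by simp
lemma PPd[simp]: "dim_row PP = 12*n" "dim_col PP = 12*n" by (simp_all add: MP_def)
lemma QQd[simp]: "dim_row QQ = 12*n" "dim_col QQ = 12*n" by (simp_all add: MQ_def)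

lemmas cs = colPQ[OF A B] Ri_Ei Ri_Ei_mult A B mult_assoc_dims

end

context fixes n :: nat and A B :: "'a::field mat"
  assumes A: "A \<in> carrier_mat n n" and B: "B \<in> carrier_mat n n"
begin
lemma Adims[simp]: "dim_row A = n" "dim_col A = n" "dim_row B = n" "dim_col B = n" using A B by auto
lemmas P1' = P1[OF A B, unfolded One_nat_def]
lemmas Q1' = Q1[OF A B, unfolded One_nat_def]
lemmas cs3 = colPQ[OF A B] P1' Q1' Ri_Ei Ri_Ei_mult[OF _ _ A] Ri_Ei_mult[OF _ _ B] A B mult_assoc_dims
  P0X[OF A B A] P0X[OF A B B] Q0X[OF A B A] Q0X[OF A B B]
lemma F1: "PP n A B * QQ n A B = QQ n A B * PP n A B"
  by (rule col_ext[of _ "12*n" 12 n], auto dest!: lt12 simp: cs3)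

lemma F2: "PP n A B * PP n A B * PP n A B = Ei 12 n 0 * Ri 12 n 6"
  by (rule col_ext[of _ "12*n" 12 n], auto dest!: lt12 simp: cs3)
lemma F3: "PP n A B * PP n A B * QQ n A B = Ei 12 n 0 * Ri 12 n 6"
  by (rule col_ext[of _ "12*n" 12 n], auto dest!: lt12 simp: cs3)
lemma F4: "PP n A B * QQ n A B * QQ n A B = Ei 12 n 0 * A * Ri 12 n 6"
  by (rule col_ext[of _ "12*n" 12 n], auto dest!: lt12 simp: cs3)
lemma F5: "Ri 12 n 0 * (QQ n A B * QQ n A B * QQ n A B) = B * Ri 12 n 6"
  by (rule col_ext[of _ "n" 12 n], auto dest!: lt12 simp: cs3)
lemma F5': "QQ n A B * QQ n A B * QQ n A B * Ei 12 n 6 = Ei 12 n 0 * B"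
  by (auto simp: cs3)
lemma F6: "PP n A B * QQ n A B * QQ n A B * QQ n A B = 0\<^sub>m (12*n) (12*n)"
  by (rule col_ext[of _ "12*n" 12 n], auto dest!: lt12 simp: cs3)
lemma F7: "QQ n A B * QQ n A B * QQ n A B * QQ n A B * Ei 12 n 11 = Ei 12 n 7"
  by (auto simp: cs3)
end


lemma smult_mult_dims: "dim_col A = dim_row B \<Longrightarrow> (k \<cdot>\<^sub>m A) * B = k \<cdot>\<^sub>m (A * (B::'a::comm_semiring_0 mat))"
  by (rule eq_matI) auto
lemma mult_smult_dims: "dim_col A = dim_row B \<Longrightarrow> A * (k \<cdot>\<^sub>m B) = k \<cdot>\<^sub>m (A * (B::'a::comm_semiring_0 mat))"
  by (rule mult_smult_distrib[of A "dim_row A" "dim_col A" B "dim_col B"]) auto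
lemma smult_smult_mat: "k \<cdot>\<^sub>m (l \<cdot>\<^sub>m A) = (k * l) \<cdot>\<^sub>m (A::'a::semigroup_mult mat)"
  by (rule eq_matI) (auto simp: mult.assoc)
lemma mult_add_dims: "dim_col A = dim_row B \<Longrightarrow> dim_row C = dim_row B \<Longrightarrow> dim_col C = dim_col B \<Longrightarrow>
   A * (B + C) = A * B + A * (C::'a::semiring_0 mat)"
  by (rule mult_add_distrib_mat[of A "dim_row A" "dim_col A" B "dim_col B"]) auto
lemma add_mult_dims: "dim_col A = dim_row C \<Longrightarrow> dim_row B = dim_row A \<Longrightarrow> dim_col B = dim_col A \<Longrightarrow>
   (A + B) * C = A * C + B * (C::'a::semiring_0 mat)"
  by (rule add_mult_distrib_mat[of A "dim_row A" "dim_col A" B C "dim_col C"]) auto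

lemma smult_add_dims: "dim_row A = dim_row B \<Longrightarrow> dim_col A = dim_col B \<Longrightarrow>
  k \<cdot>\<^sub>m (A + B) = k \<cdot>\<^sub>m A + k \<cdot>\<^sub>m (B::'a::semiring mat)"
  by (rule eq_matI) (auto simp: distrib_left)

lemma one_smult_m: "(1::'a::monoid_mult) \<cdot>\<^sub>m A = A"
  by (rule eq_matI) auto

lemma smult_eq_zero_mat:
  assumes "k \<cdot>\<^sub>m M = 0\<^sub>m (dim_row M) (dim_col M)" "M \<noteq> 0\<^sub>m (dim_row M) (dim_col M)"
  shows "(k::'a::field) = 0"
proof (rule ccontr)
  assume k: "k \<noteq> 0"
  from assms(2) obtain i j where ij: "i < dim_row M" "j < dim_col M" "M $$ (i,j) \<noteq> 0"
    by (metis eq_matI index_zero_mat(1) index_zero_mat(2) index_zero_mat(3))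
  have "(k \<cdot>\<^sub>m M) $$ (i,j) = 0" using assms(1) ij by simp
  thus False using ij k by simp
qed

lemma det_zero_pow: "(z::'a::field) ^ N = 0 \<Longrightarrow> z = 0" by simp

lemma key:
  fixes P Q P' Q' S T Et Ec Rt Rc A B A' B' :: "'a::field mat"
  assumes N: "N > 0"
    and Pc: "P \<in> carrier_mat N N" and Qc: "Q \<in> carrier_mat N N"
    and P'c: "P' \<in> carrier_mat N N" and Q'c: "Q' \<in> carrier_mat N N"
    and Sc: "S \<in> carrier_mat N N" and Tc: "T \<in> carrier_mat N N"
    and Etc: "Et \<in> carrier_mat N n" and Ecc: "Ec \<in> carrier_mat N n"
    and Rtc: "Rt \<in> carrier_mat n N" and Rcc: "Rc \<in> carrier_mat n N"
    and Ac: "A \<in> carrier_mat n n" and Bc: "B \<in> carrier_mat n n"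
    and A'c: "A' \<in> carrier_mat n n" and B'c: "B' \<in> carrier_mat n n"
    and n: "n > 0"
    and ST: "S * T = 1\<^sub>m N" and TS: "T * S = 1\<^sub>m N"
    and hU: "T * (1\<^sub>m N + P) * S = a \<cdot>\<^sub>m (1\<^sub>m N + P') + b \<cdot>\<^sub>m Q'"
    and hQ: "T * Q * S = c \<cdot>\<^sub>m (1\<^sub>m N + P') + d \<cdot>\<^sub>m Q'"
    and detP: "det P = 0" and detQ: "det Q = 0"
    and detC: "\<And>\<alpha> \<gamma> \<delta>. det (\<alpha> \<cdot>\<^sub>m (1\<^sub>m N + P') + \<gamma> \<cdot>\<^sub>m Q' + \<delta> \<cdot>\<^sub>m 1\<^sub>m N) = (\<alpha> + \<delta>) ^ N"
    and h2: "P * P * P = Ec * Rt" and h2': "P' * P' * P' = Ec * Rt"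
    and h3: "P * P * Q = Ec * Rt" and h3': "P' * P' * Q' = Ec * Rt"
    and h4: "P * Q * Q = Ec * A * Rt" and h4': "P' * Q' * Q' = Ec * A' * Rt"
    and h5: "Rc * (Q * Q * Q) = B * Rt" and h5': "Q' * Q' * Q' * Et = Ec * B'"
    and h6: "P * Q * Q * Q = 0\<^sub>m N N" and h6': "P' * Q' * Q' * Q' = 0\<^sub>m N N"
    and h7': "Q' * Q' * Q' * Q' \<noteq> 0\<^sub>m N N" and hQne: "Q \<noteq> 0\<^sub>m N N"
    and RcEc: "Rc * Ec = 1\<^sub>m n" and RtEt: "Rt * Et = 1\<^sub>m n"
  shows "similar_pairs n A B A' B'"
proof -
  have dims[simp]: "dim_row P = N" "dim_col P = N" "dim_row Q = N" "dim_col Q = N"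
    "dim_row P' = N" "dim_col P' = N" "dim_row Q' = N" "dim_col Q' = N"
    "dim_row S = N" "dim_col S = N" "dim_row T = N" "dim_col T = N"
    "dim_row Et = N" "dim_col Et = n" "dim_row Ec = N" "dim_col Ec = n"
    "dim_row Rt = n" "dim_col Rt = N" "dim_row Rc = n" "dim_col Rc = N"
    "dim_row A = n" "dim_col A = n" "dim_row B = n" "dim_col B = n"
    "dim_row A' = n" "dim_col A' = n" "dim_row B' = n" "dim_col B' = n"
    using assms by auto
  note simps = mult_assoc_dims smult_mult_dims mult_smult_dims smult_smult_mat one_smult_m
  have conj: "T * (M1 * M2) * S = (T * M1 * S) * (T * M2 * S)"
    if "M1 \<in> carrier_mat N N" "M2 \<in> carrier_mat N N" for M1 M2
  proof -
    have "(T * M1 * S) * (T * M2 * S) = T * (M1 * ((S * T) * (M2 * S)))"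
      using that by (simp add: simps)
    also have "\<dots> = T * (M1 * M2) * S" using that by (simp add: ST simps)
    finally show ?thesis by simp
  qed
  have "det (T * Q * S) = 0"
    using det_mult[OF mult_carrier_mat[OF Tc Qc] Sc] det_mult[OF Tc Qc] detQ by simp
  moreover have "c \<cdot>\<^sub>m (1\<^sub>m N + P') + d \<cdot>\<^sub>m Q' = c \<cdot>\<^sub>m (1\<^sub>m N + P') + d \<cdot>\<^sub>m Q' + 0 \<cdot>\<^sub>m 1\<^sub>m N"
    by (rule eq_matI) auto
  ultimately have "(c + 0) ^ N = 0" using hQ detC[of c d 0] by simp
  hence c0: "c = 0" by simp
  have TUS: "T * (1\<^sub>m N + P) * S = 1\<^sub>m N + T * P * S"
  proof -
    have "T * (1\<^sub>m N + P) = T + T * P" by (simp add: mult_add_dims)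
    hence "T * (1\<^sub>m N + P) * S = (T + T * P) * S" by simp
    also have "\<dots> = T * S + T * P * S" by (simp add: add_mult_dims)
    finally show ?thesis using TS by simp
  qed
  have X1: "T * P * S = a \<cdot>\<^sub>m (1\<^sub>m N + P') + b \<cdot>\<^sub>m Q' + (-1) \<cdot>\<^sub>m 1\<^sub>m N"
  proof (rule eq_matI)
    fix i j assume ij: "i < dim_row (a \<cdot>\<^sub>m (1\<^sub>m N + P') + b \<cdot>\<^sub>m Q' + (-1) \<cdot>\<^sub>m 1\<^sub>m N)"
      "j < dim_col (a \<cdot>\<^sub>m (1\<^sub>m N + P') + b \<cdot>\<^sub>m Q' + (-1) \<cdot>\<^sub>m 1\<^sub>m N)"
    hence ij: "i < N" "j < N" by auto
    have "(1\<^sub>m N + T * P * S) $$ (i,j) = (a \<cdot>\<^sub>m (1\<^sub>m N + P') + b \<cdot>\<^sub>m Q') $$ (i,j)"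
      using hU TUS by simp
    thus "(T * P * S) $$ (i,j) = (a \<cdot>\<^sub>m (1\<^sub>m N + P') + b \<cdot>\<^sub>m Q' + (-1) \<cdot>\<^sub>m 1\<^sub>m N) $$ (i,j)"
      using ij by (auto simp: algebra_simps)
  qed auto
  have "det (T * P * S) = 0"
    using det_mult[OF mult_carrier_mat[OF Tc Pc] Sc] det_mult[OF Tc Pc] detP by simp
  hence "(a + -1) ^ N = 0" using X1 detC[of a b "-1"] by simp
  hence a1: "a = 1" by simp
  have X: "T * P * S = P' + b \<cdot>\<^sub>m Q'"
    by (rule eq_matI) (use X1 a1 in auto)
  have Y: "T * Q * S = d \<cdot>\<^sub>m Q'"
    by (rule eq_matI) (use hQ c0 in auto)
  have SQT: "S * (T * Q * S) * T = Q"
  proof -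
    have "S * (T * Q * S) * T = (S * T) * (Q * (S * T))" by (simp add: simps)
    thus ?thesis using ST by simp
  qed
  have d0: "d \<noteq> 0"
  proof
    assume "d = 0"
    hence "T * Q * S = 0\<^sub>m N N" using Y by (auto intro!: eq_matI)
    hence "Q = 0\<^sub>m N N" using SQT by simp
    thus False using hQne by simp
  qed
  have "T * (P * Q * Q * Q) * S = (T * P * S) * (T * Q * S) * (T * Q * S) * (T * Q * S)"
    using conj Pc Qc by (simp add: conj[symmetric])
  hence "0\<^sub>m N N = (P' + b \<cdot>\<^sub>m Q') * (d \<cdot>\<^sub>m Q') * (d \<cdot>\<^sub>m Q') * (d \<cdot>\<^sub>m Q')"
    using h6 X Y by simp
  also have "\<dots> = (d*d*d) \<cdot>\<^sub>m (P' * Q' * Q' * Q') + (b*d*d*d) \<cdot>\<^sub>m (Q' * Q' * Q' * Q')"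
    by (simp add: simps add_mult_dims smult_add_dims mult_ac)
  also have "\<dots> = (b*d*d*d) \<cdot>\<^sub>m (Q' * Q' * Q' * Q')"
    using h6' by (intro eq_matI) auto
  finally have "(b*d*d*d) \<cdot>\<^sub>m (Q' * Q' * Q' * Q') = 0\<^sub>m N N" by simp
  hence "b*d*d*d = 0" using smult_eq_zero_mat[of "b*d*d*d" "Q' * Q' * Q' * Q'"] h7' by simp
  hence b0: "b = 0" using d0 by simp
  have X': "T * P * S = P'" using X b0 by (auto intro!: eq_matI)
  have PS: "P * S = S * P'"
  proof -
    have "S * (T * P * S) = (S * T) * (P * S)" by (simp add: simps)
    thus ?thesis using X' ST by simp
  qed
  have QS: "Q * S = d \<cdot>\<^sub>m (S * Q')"
  proof -
    have "S * (T * Q * S) = (S * T) * (Q * S)" by (simp add: simps)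
    thus ?thesis using Y ST by (simp add: simps)
  qed
  have TP: "T * P = P' * T"
  proof -
    have "(T * P * S) * T = (T * P) * (S * T)" by (simp add: simps)
    thus ?thesis using X' ST by simp
  qed
  have PSr: "P * (S * Z) = S * (P' * Z)" if "dim_row Z = N" for Z
  proof -
    have "P * (S * Z) = (P * S) * Z" using that by (simp add: simps)
    also have "\<dots> = S * (P' * Z)" using that by (simp add: PS simps)
    finally show ?thesis .
  qed
  have QSr: "Q * (S * Z) = d \<cdot>\<^sub>m (S * (Q' * Z))" if "dim_row Z = N" for Z
  proof -
    have "Q * (S * Z) = (Q * S) * Z" using that by (simp add: simps)
    also have "\<dots> = d \<cdot>\<^sub>m (S * (Q' * Z))" using that by (simp add: QS simps)
    finally show ?thesis .
  qed
  have TPr: "T * (P * Z) = P' * (T * Z)" if "dim_row Z = N" for Z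
  proof -
    have "T * (P * Z) = (T * P) * Z" using that by (simp add: simps)
    also have "\<dots> = P' * (T * Z)" using that by (simp add: TP simps)
    finally show ?thesis .
  qed
  have RcEcr: "Rc * (Ec * Z) = Z" if "dim_row Z = n" for Z
  proof -
    have "Rc * (Ec * Z) = (Rc * Ec) * Z" using that by (simp add: simps)
    thus ?thesis using that RcEc by simp
  qed
  have STr: "S * (T * Z) = Z" if "dim_row Z = N" for Z
  proof -
    have "S * (T * Z) = (S * T) * Z" using that by (simp add: simps)
    thus ?thesis using that ST by simp
  qed
  have "P * P * P * S = S * (P' * P' * P')" by (simp add: simps PSr PS)
  hence E1: "Ec * Rt * S = S * (Ec * Rt)" by (simp only: h2 h2')
  have "T * (P * P * P) = P' * P' * P' * T" by (simp add: simps TPr TP)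
  hence E1T: "T * (Ec * Rt) = Ec * Rt * T" by (simp only: h2 h2')
  define \<sigma> where "\<sigma> = Rc * S * Ec"
  define \<tau> where "\<tau> = Rc * T * Ec"
  have \<sigma>c: "\<sigma> \<in> carrier_mat n n" "\<tau> \<in> carrier_mat n n" unfolding \<sigma>_def \<tau>_def by auto
  hence \<sigma>d[simp]: "dim_row \<sigma> = n" "dim_col \<sigma> = n" "dim_row \<tau> = n" "dim_col \<tau> = n" by auto
  have RtS: "Rt * S = \<sigma> * Rt"
  proof -
    have "Rc * (Ec * Rt * S) = Rc * (S * (Ec * Rt))" using E1 by simp
    thus ?thesis unfolding \<sigma>_def by (simp add: simps RcEcr)
  qed
  have RtT: "Rt * T = \<tau> * Rt"
  proof -
    have "Rc * (T * (Ec * Rt)) = Rc * (Ec * Rt * T)" using E1T by simp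
    thus ?thesis unfolding \<tau>_def by (simp add: simps RcEcr)
  qed
  have st: "\<sigma> * \<tau> = 1\<^sub>m n"
  proof -
    have "Rt * S * T * Et = 1\<^sub>m n" by (simp add: simps STr RtEt)
    moreover have "Rt * S * T * Et = \<sigma> * Rt * T * Et" using RtS by simp
    moreover have "\<sigma> * Rt * T * Et = \<sigma> * (Rt * T) * Et" by (simp add: simps)
    moreover have "\<sigma> * (Rt * T) * Et = \<sigma> * \<tau> * (Rt * Et)" using RtT by (simp add: simps)
    ultimately show ?thesis using RtEt by simp
  qed
  have ts: "\<tau> * \<sigma> = 1\<^sub>m n" by (rule mat_mult_left_right_inverse[OF \<sigma>c st])
  have \<sigma>ne: "\<sigma> \<noteq> 0\<^sub>m n n"
  proof
    assume "\<sigma> = 0\<^sub>m n n"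
    hence "\<sigma> * \<tau> = 0\<^sub>m n n" by simp
    hence "1\<^sub>m n $$ (0,0) = (0\<^sub>m n n :: 'a mat) $$ (0,0)" using st by simp
    thus False using n by simp
  qed
  have RSE: "Rt * (S * Et) = \<sigma>"
  proof -
    have "Rt * (S * Et) = (Rt * S) * Et" by (simp add: simps)
    also have "\<dots> = \<sigma> * (Rt * Et)" using RtS by (simp add: simps)
    finally show ?thesis using RtEt by simp
  qed
  have "P * P * Q * S = d \<cdot>\<^sub>m (S * (P' * P' * Q'))" by (simp add: simps PSr PS QSr QS)
  hence "Ec * Rt * S = d \<cdot>\<^sub>m (S * (Ec * Rt))" by (simp only: h3 h3')
  hence "Rc * (Ec * Rt * S) * Et = Rc * (d \<cdot>\<^sub>m (S * (Ec * Rt))) * Et" by simp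
  hence "Rt * (S * Et) = d \<cdot>\<^sub>m (Rc * (S * Ec) * (Rt * Et))" by (simp add: simps RcEcr)
  hence "\<sigma> = d \<cdot>\<^sub>m \<sigma>" using RSE RtEt unfolding \<sigma>_def by (simp add: simps)
  hence sde: "\<sigma> = d \<cdot>\<^sub>m \<sigma>" .
  have "(1 - d) \<cdot>\<^sub>m \<sigma> = 0\<^sub>m n n"
  proof (rule eq_matI)
    fix i j assume ij: "i < dim_row (0\<^sub>m n n :: 'a mat)" "j < dim_col (0\<^sub>m n n :: 'a mat)"
    have "\<sigma> $$ (i,j) = (d \<cdot>\<^sub>m \<sigma>) $$ (i,j)" using sde by (rule arg_cong)
    thus "((1 - d) \<cdot>\<^sub>m \<sigma>) $$ (i,j) = (0\<^sub>m n n :: 'a mat) $$ (i,j)" using ij by (simp add: algebra_simps)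
  qed auto
  hence "1 - d = 0" using smult_eq_zero_mat[of "1-d" \<sigma>] \<sigma>ne by simp
  hence d1: "d = 1" by simp
  have "P * Q * Q * S = S * (P' * Q' * Q')" by (simp add: simps PSr PS QSr QS d1)
  hence "Ec * A * Rt * S = S * (Ec * A' * Rt)" by (simp only: h4 h4')
  hence "Rc * (Ec * A * Rt * S) * Et = Rc * (S * (Ec * A' * Rt)) * Et" by simp
  hence "A * (Rt * (S * Et)) = Rc * (S * Ec) * A' * (Rt * Et)" by (simp add: simps RcEcr)
  hence EA: "A * \<sigma> = \<sigma> * A'" using RSE RtEt unfolding \<sigma>_def by (simp add: simps)
  have "Rc * (Q * Q * Q) * S * Et = Rc * S * (Q' * Q' * Q' * Et)" by (simp add: simps QSr QS d1)
  hence "B * Rt * S * Et = Rc * S * (Ec * B')" by (simp only: h5 h5')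
  hence EB: "B * \<sigma> = \<sigma> * B'" using RSE unfolding \<sigma>_def by (simp add: simps)
  show ?thesis unfolding similar_pairs_def
  proof (intro exI conjI)
    show "\<sigma> \<in> carrier_mat n n" "\<tau> \<in> carrier_mat n n" by (fact \<sigma>c)+
    show "\<sigma> * \<tau> = 1\<^sub>m n" "\<tau> * \<sigma> = 1\<^sub>m n" by (fact st ts)+
    have "\<tau> * A * \<sigma> = \<tau> * (\<sigma> * A')" using EA by (simp add: simps)
    also have "\<dots> = (\<tau> * \<sigma>) * A'" by (simp add: simps)
    finally show "\<tau> * A * \<sigma> = A'" using ts by simp
    have "\<tau> * B * \<sigma> = \<tau> * (\<sigma> * B')" using EB by (simp add: simps)
    also have "\<dots> = (\<tau> * \<sigma>) * B'" by (simp add: simps)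
    finally show "\<tau> * B * \<sigma> = B'" using ts by simp
  qed
qed


lemma eval_conj:
  assumes A: "A \<in> carrier_mat n n" and B: "B \<in> carrier_mat n n"
    and S: "S \<in> carrier_mat n n" and T: "T \<in> carrier_mat n n"
    and ST: "S * T = 1\<^sub>m n" and TS: "T * S = 1\<^sub>m n"
    and hA: "T * A * S = A'" and hB: "T * B * S = B'"
  shows "T * nc_eval n p A B * S = nc_eval n p A' B'"
proof (induction p)
  case (NCConst c)
  have "T * (c \<cdot>\<^sub>m 1\<^sub>m n) * S = c \<cdot>\<^sub>m (T * S)" using S T by (simp add: mult_smult_dims smult_mult_dims)
  thus ?case using TS by simp
next
  case NCX thus ?case using hA by simp
next
  case NCY thus ?case using hB by simp
next
  case (NCAdd p q)
  have cp: "nc_eval n p A B \<in> carrier_mat n n" "nc_eval n q A B \<in> carrier_mat n n"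
    using nc_eval_carrier[OF A B] by auto
  have "T * (nc_eval n p A B + nc_eval n q A B) * S = T * nc_eval n p A B * S + T * nc_eval n q A B * S"
    using cp S T by (simp add: mult_add_dims add_mult_dims)
  thus ?case using NCAdd by simp
next
  case (NCMul p q)
  have cp: "nc_eval n p A B \<in> carrier_mat n n" "nc_eval n q A B \<in> carrier_mat n n"
    using nc_eval_carrier[OF A B] by auto
  have "T * (nc_eval n p A B * nc_eval n q A B) * S = (T * nc_eval n p A B * S) * (T * nc_eval n q A B * S)"
  proof -
    have "(T * nc_eval n p A B * S) * (T * nc_eval n q A B * S) = T * (nc_eval n p A B * ((S * T) * (nc_eval n q A B * S)))"
      using cp S T by (simp add: mult_assoc_dims)
    also have "\<dots> = T * (nc_eval n p A B * nc_eval n q A B) * S" using cp S T ST by (simp add: mult_assoc_dims)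
    finally show ?thesis by simp
  qed
  thus ?case using NCMul by simp
qed

definition MD :: "nat \<Rightarrow> 'a::field ncpoly mat" where
  "MD k = mat k k (\<lambda>(i,j). if i = j then NCX else NCConst 0)"

lemma MD_carrier[simp]: "MD k \<in> carrier_mat k k" by (simp add: MD_def)
lemma MD_dims[simp]: "dim_row (MD k) = k" "dim_col (MD k) = k" by (simp_all add: MD_def)

lemma MD_col: assumes S: "S \<in> carrier_mat n n" and g: "g < k"
  shows "nc_subst n (MD k) S S * Ei k n g = Ei k n g * S"
  by (rule nc_subst_col_single[OF MD_carrier S S g g]) (auto simp: MD_def g)

definition single_cols :: "'a::zero ncpoly mat \<Rightarrow> bool" where
  "single_cols M \<longleftrightarrow> (\<forall>g < dim_col M. \<exists>i < dim_row M. \<forall>I < dim_row M. I \<noteq> i \<longrightarrow> M $$ (I, g) = NCConst 0)"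

lemma conj_blocks:
  assumes M: "M \<in> carrier_mat k k" and sc: "single_cols M"
    and A: "A \<in> carrier_mat n n" and B: "B \<in> carrier_mat n n"
    and A': "A' \<in> carrier_mat n n" and B': "B' \<in> carrier_mat n n"
    and S: "S \<in> carrier_mat n n" and T: "T \<in> carrier_mat n n"
    and ST: "S * T = 1\<^sub>m n" and TS: "T * S = 1\<^sub>m n"
    and hA: "T * A * S = A'" and hB: "T * B * S = B'"
  shows "nc_subst n (MD k) T T * nc_subst n M A B * nc_subst n (MD k) S S = nc_subst n M A' B'"
proof (rule col_ext[of _ "k*n" k n])
  show "nc_subst n (MD k) T T * nc_subst n M A B * nc_subst n (MD k) S S \<in> carrier_mat (k * n) (k * n)"
    using M by auto
  show "nc_subst n M A' B' \<in> carrier_mat (k * n) (k * n)" using M by auto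
  fix g assume g: "g < k"
  obtain i where i: "i < k" and z: "\<And>I. I < k \<Longrightarrow> I \<noteq> i \<Longrightarrow> M $$ (I, g) = NCConst 0"
    using sc g M unfolding single_cols_def by auto
  define X where "X = nc_eval n (M $$ (i,g)) A B"
  have Xc: "X \<in> carrier_mat n n" unfolding X_def using nc_eval_carrier[OF A B] by auto
  have c1: "nc_subst n M A B * Ei k n g = Ei k n i * X"
    by (rule nc_subst_col_single[OF M A B g i z]) (auto simp: X_def)
  have c2: "nc_subst n M A' B' * Ei k n g = Ei k n i * nc_eval n (M $$ (i,g)) A' B'"
    by (rule nc_subst_col_single[OF M A' B' g i z]) auto
  have dS: "nc_subst n (MD k) S S * Ei k n g = Ei k n g * S" by (rule MD_col[OF S g])
  have dT: "nc_subst n (MD k) T T * Ei k n i = Ei k n i * T" by (rule MD_col[OF T i])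
  have dims[simp]: "dim_row S = n" "dim_col S = n" "dim_row T = n" "dim_col T = n"
    "dim_row X = n" "dim_col X = n" using S T Xc by auto
  have "nc_subst n (MD k) T T * nc_subst n M A B * nc_subst n (MD k) S S * Ei k n g
      = nc_subst n (MD k) T T * (nc_subst n M A B * (nc_subst n (MD k) S S * Ei k n g))"
    using M by (simp add: mult_assoc_dims)
  also have "\<dots> = nc_subst n (MD k) T T * ((nc_subst n M A B * Ei k n g) * S)"
    unfolding dS using M by (simp add: mult_assoc_dims)
  also have "\<dots> = (nc_subst n (MD k) T T * Ei k n i) * (X * S)"
    unfolding c1 using M by (simp add: mult_assoc_dims)
  also have "\<dots> = Ei k n i * (T * X * S)"
    unfolding dT by (simp add: mult_assoc_dims)
  also have "T * X * S = nc_eval n (M $$ (i,g)) A' B'"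
    unfolding X_def by (rule eval_conj[OF A B S T ST TS hA hB])
  finally show "nc_subst n (MD k) T T * nc_subst n M A B * nc_subst n (MD k) S S * Ei k n g =
     nc_subst n M A' B' * Ei k n g" using c2 by simp
qed

lemma MD_inv:
  assumes S: "S \<in> carrier_mat n n" and T: "T \<in> carrier_mat n n" and ST: "S * T = 1\<^sub>m n"
  shows "nc_subst n (MD k) S S * nc_subst n (MD k) T T = 1\<^sub>m (k*n)"
proof (rule col_ext[of _ "k*n" k n])
  show "nc_subst n (MD k) S S * nc_subst n (MD k) T T \<in> carrier_mat (k * n) (k * n)" by auto
  show "1\<^sub>m (k * n) \<in> carrier_mat (k * n) (k * n)" by auto
  fix g assume g: "g < k"
  have dims[simp]: "dim_row S = n" "dim_col S = n" "dim_row T = n" "dim_col T = n" using S T by auto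
  have "nc_subst n (MD k) S S * nc_subst n (MD k) T T * Ei k n g
    = nc_subst n (MD k) S S * (nc_subst n (MD k) T T * Ei k n g)" by (simp add: mult_assoc_dims)
  also have "\<dots> = (nc_subst n (MD k) S S * Ei k n g) * T" unfolding MD_col[OF T g] by (simp add: mult_assoc_dims)
  also have "\<dots> = Ei k n g * (S * T)" unfolding MD_col[OF S g] by (simp add: mult_assoc_dims)
  finally show "nc_subst n (MD k) S S * nc_subst n (MD k) T T * Ei k n g = 1\<^sub>m (k * n) * Ei k n g"
    using ST by simp
qed


lemma det_tri_const:
  assumes M: "M \<in> carrier_mat N N" and low: "\<And>i j. j < i \<Longrightarrow> i < N \<Longrightarrow> M $$ (i,j) = 0"
    and diag: "\<And>i. i < N \<Longrightarrow> M $$ (i,i) = z"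
  shows "det M = (z::'a::field) ^ N"
proof -
  have ut: "upper_triangular M" using M low by (auto intro!: upper_triangularI)
  have "diag_mat M = replicate N z"
    using M diag by (auto simp: diag_mat_def intro!: nth_equalityI)
  thus ?thesis using det_upper_triangular[OF ut M] by simp
qed

lemma MP_low: "r < 12 \<Longrightarrow> c < 12 \<Longrightarrow> c \<le> r \<Longrightarrow> MP $$ (r,c) = NCConst 0"
  by (auto simp: MP_def)
lemma MQ_low: "r < 12 \<Longrightarrow> c < 12 \<Longrightarrow> c \<le> r \<Longrightarrow> MQ $$ (r,c) = NCConst 0"
  by (auto simp: MQ_def)

lemma div_lt12: "i < 12 * n \<Longrightarrow> i div n < (12::nat)"
  by (metis less_mult_imp_div_less mult.commute)

lemma subst_low:
  assumes M: "M \<in> carrier_mat 12 12" and low: "\<And>r c. r < 12 \<Longrightarrow> c < 12 \<Longrightarrow> c \<le> r \<Longrightarrow> M $$ (r,c) = NCConst 0"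
    and ij: "i < 12*n" "j < 12*n" "j \<le> i"
  shows "nc_subst n M A B $$ (i,j) = (0::'a::field)"
proof -
  have n: "0 < n" using ij by (cases n) auto
  have "j div n \<le> i div n" using ij by (simp add: div_le_mono)
  hence "M $$ (i div n, j div n) = NCConst 0" using low div_lt12 ij by auto
  thus ?thesis using M ij n by (simp add: nc_subst_def)
qed

lemma idx_eq: "0 < n \<Longrightarrow> (i::nat) = j \<longleftrightarrow> i div n = j div n \<and> i mod n = j mod n"
  by (metis div_mult_mod_eq)

lemma M1_eq:
  assumes A: "A \<in> carrier_mat n n" and B: "B \<in> carrier_mat n n"
  shows "nc_subst n M1 A B = 1\<^sub>m (12*n) + nc_subst n MP A B"
proof (rule eq_matI)
  fix i j assume ij: "i < dim_row (1\<^sub>m (12*n) + nc_subst n MP A B)" "j < dim_col (1\<^sub>m (12*n) + nc_subst n MP A B)"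
  hence ij: "i < 12*n" "j < 12*n" by auto
  have n: "0 < n" using ij by (cases n) auto
  have d: "i div n < 12" "j div n < 12" using ij div_lt12 by auto
  show "nc_subst n M1 A B $$ (i,j) = (1\<^sub>m (12*n) + nc_subst n MP A B) $$ (i,j)"
  proof (cases "i div n = j div n")
    case True
    have "(MP :: 'a ncpoly mat) $$ (i div n, j div n) = NCConst 0" using True d MP_low by auto
    thus ?thesis using True ij d n idx_eq[OF n, of i j] by (simp add: nc_subst_def M1_def)
  next
    case False
    thus ?thesis using ij d n idx_eq[OF n, of i j] by (simp add: nc_subst_def M1_def)
  qed
qed auto

lemma single_MP: "single_cols MP"
  unfolding single_cols_def
proof (intro allI impI)
  fix g assume "g < dim_col (MP :: 'a ncpoly mat)"
  hence "g < 12" by simp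
  thus "\<exists>i<dim_row (MP :: 'a ncpoly mat). \<forall>I<dim_row MP. I \<noteq> i \<longrightarrow> (MP :: 'a ncpoly mat) $$ (I, g) = NCConst 0"
    by (intro exI[of _ "if g = 6 then 4 else if g = 4 then 1 else if g = 5 then 2 else 0"])
       (auto simp: MP_def dest!: lt12)
qed

lemma single_MQ: "single_cols MQ"
  unfolding single_cols_def
proof (intro allI impI)
  fix g assume "g < dim_col (MQ :: 'a ncpoly mat)"
  hence "g < 12" by simp
  thus "\<exists>i<dim_row (MQ :: 'a ncpoly mat). \<forall>I<dim_row MQ. I \<noteq> i \<longrightarrow> (MQ :: 'a ncpoly mat) $$ (I, g) = NCConst 0"
    by (intro exI[of _ "if g = 6 then 5 else if g = 4 then 2 else if g = 5 then 3 else if g \<ge> 8 then g - 1 else 0"])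
       (auto simp: MQ_def dest!: lt12)
qed


lemma Ei_entry: "0 < n \<Longrightarrow> g < k \<Longrightarrow> Ei k n g $$ (g*n, 0) = (1::'a::field)"
  using idx_le[of g k 0 n] by (simp add: Ei_def)

lemma Ei_ne0: "0 < n \<Longrightarrow> g < k \<Longrightarrow> Ei k n g \<noteq> (0\<^sub>m (k*n) n :: 'a::field mat)"
proof
  assume n: "0 < n" and g: "g < k" and e: "Ei k n g = (0\<^sub>m (k*n) n :: 'a mat)"
  have "Ei k n g $$ (g*n, 0) = (0\<^sub>m (k*n) n :: 'a mat) $$ (g*n, 0)" using e by simp
  thus False using Ei_entry[OF n g, where 'a='a] idx_le[of g k 0 n] n g by simp
qed

lemma invertible_by_det:
  assumes M: "M \<in> carrier_mat N N" and d: "det M \<noteq> (0::'a::field)"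
  shows "invertible_mat M"
proof -
  have "M \<in> Units (ring_mat TYPE('a) N undefined)" by (rule det_non_zero_imp_unit[OF M d])
  then obtain B where B: "B \<in> carrier_mat N N" "B * M = 1\<^sub>m N" "M * B = 1\<^sub>m N"
    unfolding Units_def ring_mat_def by auto
  thus ?thesis using M unfolding invertible_mat_def inverts_mat_def square_mat.simps
    by (intro conjI exI[of _ B]) auto
qed

context fixes n :: nat and A B :: "'a::field mat"
  assumes n: "0 < n" and A: "A \<in> carrier_mat n n" and B: "B \<in> carrier_mat n n"
begin

lemma PP_low: "i < 12*n \<Longrightarrow> j < 12*n \<Longrightarrow> j \<le> i \<Longrightarrow> PP n A B $$ (i,j) = 0"
  by (rule subst_low[OF MP_carrier MP_low])
lemma QQ_low: "i < 12*n \<Longrightarrow> j < 12*n \<Longrightarrow> j \<le> i \<Longrightarrow> QQ n A B $$ (i,j) = 0"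
  by (rule subst_low[OF MQ_carrier MQ_low])

lemma det_PP: "det (PP n A B) = 0"
proof -
  have "det (PP n A B) = 0 ^ (12*n)"
    by (rule det_tri_const[OF nc_subst_carrier[OF MP_carrier]]) (auto intro: PP_low)
  thus ?thesis using n by simp
qed
lemma det_QQ: "det (QQ n A B) = 0"
proof -
  have "det (QQ n A B) = 0 ^ (12*n)"
    by (rule det_tri_const[OF nc_subst_carrier[OF MQ_carrier]]) (auto intro: QQ_low)
  thus ?thesis using n by simp
qed

lemma det_comb: "det (\<alpha> \<cdot>\<^sub>m (1\<^sub>m (12*n) + PP n A B) + \<gamma> \<cdot>\<^sub>m QQ n A B + \<delta> \<cdot>\<^sub>m 1\<^sub>m (12*n)) = (\<alpha> + \<delta>) ^ (12*n)"
  by (rule det_tri_const[of _ "12*n"]) (auto simp: PP_low QQ_low)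

lemma QQ_ne: "QQ n A B \<noteq> 0\<^sub>m (12*n) (12*n)"
proof
  assume "QQ n A B = 0\<^sub>m (12*n) (12*n)"
  hence "QQ n A B * Ei 12 n 6 = 0\<^sub>m (12*n) n" by simp
  thus False using Q6[OF A B] Ei_ne0[OF n, of 5 12, where 'a='a] by simp
qed

lemma QQ4_ne: "QQ n A B * QQ n A B * QQ n A B * QQ n A B \<noteq> 0\<^sub>m (12*n) (12*n)"
proof
  assume "QQ n A B * QQ n A B * QQ n A B * QQ n A B = 0\<^sub>m (12*n) (12*n)"
  hence "QQ n A B * QQ n A B * QQ n A B * QQ n A B * Ei 12 n 11 = 0\<^sub>m (12*n) n" by simp
  thus False using F7[OF A B] Ei_ne0[OF n, of 7 12, where 'a='a] by simp
qed

lemma obj: "comm_2space_nonsing (nc_subst n M1 A B) (nc_subst n MQ A B)"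
proof -
  let ?U = "nc_subst n M1 A B" and ?P = "PP n A B" and ?Q = "QQ n A B"
  have U: "?U = 1\<^sub>m (12*n) + ?P" by (rule M1_eq[OF A B])
  have comm: "?U * ?Q = ?Q * ?U"
  proof -
    have "?U * ?Q = ?Q + ?P * ?Q" unfolding U by (simp add: add_mult_dims)
    moreover have "?Q * ?U = ?Q + ?Q * ?P" unfolding U by (simp add: mult_add_dims)
    ultimately show ?thesis using F1[OF A B] by simp
  qed
  have lin: "a = 0 \<and> b = 0" if h: "a \<cdot>\<^sub>m ?U + b \<cdot>\<^sub>m ?Q = 0\<^sub>m (12*n) (12*n)" for a b
  proof -
    have i0: "0 < 12 * n" using n by simp
    have "(a \<cdot>\<^sub>m ?U + b \<cdot>\<^sub>m ?Q) $$ (0,0) = 0" using h i0 by simp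
    moreover have "?P $$ (0,0) = 0" "?Q $$ (0,0) = 0" using PP_low QQ_low i0 by auto
    ultimately have a: "a = 0" using i0 unfolding U by simp
    have i5: "5*n < 12*n" "6*n < 12*n" using n by auto
    have "(a \<cdot>\<^sub>m ?U + b \<cdot>\<^sub>m ?Q) $$ (5*n,6*n) = 0" using h i5 by simp
    moreover have "?P $$ (5*n,6*n) = 0" using i5 n by (simp add: nc_subst_def MP_def)
    moreover have "?Q $$ (5*n,6*n) = 1" using i5 n by (simp add: nc_subst_def MQ_def)
    ultimately have "b = 0" using a i5 unfolding U by simp
    with a show ?thesis by simp
  qed
  have detU: "det ?U = 1"
  proof -
    have "det ?U = 1 ^ (12*n)" unfolding U
      by (rule det_tri_const[of _ "12*n"]) (auto simp: PP_low)
    thus ?thesis by simp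
  qed
  have inv: "invertible_mat ?U" by (rule invertible_by_det[of _ "12*n"]) (auto simp: detU)
  have Uin: "?U \<in> span2 ?U ?Q"
    unfolding span2_def by (intro CollectI exI[of _ 1] exI[of _ 0]) (auto intro!: eq_matI)
  show ?thesis unfolding comm_2space_nonsing_def comm_2space_def
    using comm lin inv Uin by (intro conjI exI[of _ "12*n"] bexI[of _ ?U]) auto
qed
end


lemma lin_conj:
  assumes X: "X \<in> carrier_mat N N" and Y: "Y \<in> carrier_mat N N"
    and S: "S \<in> carrier_mat N N" and T: "T \<in> carrier_mat N N"
  shows "T * (a \<cdot>\<^sub>m X + b \<cdot>\<^sub>m Y) * S = a \<cdot>\<^sub>m (T * X * S) + b \<cdot>\<^sub>m (T * Y * (S::'a::field mat))"
  using X Y S T by (simp add: mult_add_dims add_mult_dims mult_smult_dims smult_mult_dims)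

lemma easy_dir:
  assumes n: "0 < n" and A: "A \<in> carrier_mat n n" and B: "B \<in> carrier_mat n n"
    and A': "A' \<in> carrier_mat n n" and B': "B' \<in> carrier_mat n n"
    and sp: "similar_pairs n A B A' B'"
  shows "similar_spaces (nc_subst n M1 A B) (nc_subst n MQ A B) (nc_subst n M1 A' B') (nc_subst n MQ A' B')"
proof -
  from sp obtain S T where S: "S \<in> carrier_mat n n" and T: "T \<in> carrier_mat n n"
    and ST: "S * T = 1\<^sub>m n" and TS: "T * S = 1\<^sub>m n" and hA: "T * A * S = A'" and hB: "T * B * S = B'"
    unfolding similar_pairs_def by blast
  define Sb where "Sb = nc_subst n (MD 12) S S"
  define Tb where "Tb = nc_subst n (MD 12) T T"
  have Sbc: "Sb \<in> carrier_mat (12*n) (12*n)" "Tb \<in> carrier_mat (12*n) (12*n)"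
    unfolding Sb_def Tb_def by auto
  have SbTb: "Sb * Tb = 1\<^sub>m (12*n)" unfolding Sb_def Tb_def by (rule MD_inv[OF S T ST])
  have TbSb: "Tb * Sb = 1\<^sub>m (12*n)" unfolding Sb_def Tb_def by (rule MD_inv[OF T S TS])
  have cP: "Tb * PP n A B * Sb = PP n A' B'" unfolding Sb_def Tb_def
    by (rule conj_blocks[OF MP_carrier single_MP A B A' B' S T ST TS hA hB])
  have cQ: "Tb * QQ n A B * Sb = QQ n A' B'" unfolding Sb_def Tb_def
    by (rule conj_blocks[OF MQ_carrier single_MQ A B A' B' S T ST TS hA hB])
  have cU: "Tb * nc_subst n M1 A B * Sb = nc_subst n M1 A' B'"
  proof -
    have "Tb * nc_subst n M1 A B * Sb = Tb * (1\<^sub>m (12*n) + PP n A B) * Sb" using M1_eq[OF A B] by simp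
    also have "\<dots> = Tb * Sb + Tb * PP n A B * Sb" using Sbc by (simp add: mult_add_dims add_mult_dims)
    also have "\<dots> = nc_subst n M1 A' B'" using TbSb cP M1_eq[OF A' B'] by simp
    finally show ?thesis .
  qed
  show ?thesis unfolding similar_spaces_def
  proof (intro exI conjI)
    show "Sb \<in> carrier_mat (12*n) (12*n)" "Tb \<in> carrier_mat (12*n) (12*n)" by (fact Sbc)+
    show "Sb * Tb = 1\<^sub>m (12*n)" "Tb * Sb = 1\<^sub>m (12*n)" by (fact SbTb TbSb)+
    show "nc_subst n M1 A B \<in> carrier_mat (12*n) (12*n)" "nc_subst n MQ A B \<in> carrier_mat (12*n) (12*n)"
      "nc_subst n M1 A' B' \<in> carrier_mat (12*n) (12*n)" "nc_subst n MQ A' B' \<in> carrier_mat (12*n) (12*n)"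
      by auto
    show "(\<lambda>X. Tb * X * Sb) ` span2 (nc_subst n M1 A B) (nc_subst n MQ A B) = span2 (nc_subst n M1 A' B') (nc_subst n MQ A' B')"
    proof
      show "(\<lambda>X. Tb * X * Sb) ` span2 (nc_subst n M1 A B) (nc_subst n MQ A B) \<subseteq> span2 (nc_subst n M1 A' B') (nc_subst n MQ A' B')"
      proof
        fix Z assume "Z \<in> (\<lambda>X. Tb * X * Sb) ` span2 (nc_subst n M1 A B) (nc_subst n MQ A B)"
        then obtain a b where Z: "Z = Tb * (a \<cdot>\<^sub>m nc_subst n M1 A B + b \<cdot>\<^sub>m nc_subst n MQ A B) * Sb"
          unfolding span2_def by auto
        hence "Z = a \<cdot>\<^sub>m nc_subst n M1 A' B' + b \<cdot>\<^sub>m nc_subst n MQ A' B'"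
          using lin_conj[of "nc_subst n M1 A B" "12*n" "nc_subst n MQ A B" Sb Tb a b] Sbc cU cQ by simp
        thus "Z \<in> span2 (nc_subst n M1 A' B') (nc_subst n MQ A' B')" unfolding span2_def by auto
      qed
      show "span2 (nc_subst n M1 A' B') (nc_subst n MQ A' B') \<subseteq> (\<lambda>X. Tb * X * Sb) ` span2 (nc_subst n M1 A B) (nc_subst n MQ A B)"
      proof
        fix Z assume "Z \<in> span2 (nc_subst n M1 A' B') (nc_subst n MQ A' B')"
        then obtain a b where Z: "Z = a \<cdot>\<^sub>m nc_subst n M1 A' B' + b \<cdot>\<^sub>m nc_subst n MQ A' B'"
          unfolding span2_def by auto
        hence "Z = Tb * (a \<cdot>\<^sub>m nc_subst n M1 A B + b \<cdot>\<^sub>m nc_subst n MQ A B) * Sb"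
          using lin_conj[of "nc_subst n M1 A B" "12*n" "nc_subst n MQ A B" Sb Tb a b] Sbc cU cQ by simp
        moreover have "a \<cdot>\<^sub>m nc_subst n M1 A B + b \<cdot>\<^sub>m nc_subst n MQ A B \<in> span2 (nc_subst n M1 A B) (nc_subst n MQ A B)"
          unfolding span2_def by auto
        ultimately show "Z \<in> (\<lambda>X. Tb * X * Sb) ` span2 (nc_subst n M1 A B) (nc_subst n MQ A B)" by blast
      qed
    qed
  qed
qed

lemma hard_dir:
  assumes n: "0 < n" and A: "A \<in> carrier_mat n n" and B: "B \<in> carrier_mat n n"
    and A': "A' \<in> carrier_mat n n" and B': "B' \<in> carrier_mat n n"
    and ss: "similar_spaces (nc_subst n M1 A B) (nc_subst n MQ A B) (nc_subst n M1 A' B') (nc_subst n MQ A' B')"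
  shows "similar_pairs n A B A' B'"
proof -
  let ?U = "nc_subst n M1 A B" and ?Q = "nc_subst n MQ A B"
  let ?U' = "nc_subst n M1 A' B'" and ?Q' = "nc_subst n MQ A' B'"
  from ss obtain N S T where S: "S \<in> carrier_mat N N" and T: "T \<in> carrier_mat N N"
    and ST: "S * T = 1\<^sub>m N" and TS: "T * S = 1\<^sub>m N" and Uc: "?U \<in> carrier_mat N N"
    and im: "(\<lambda>X. T * X * S) ` span2 ?U ?Q = span2 ?U' ?Q'"
    unfolding similar_spaces_def by blast
  have N: "N = 12*n" using Uc by auto
  have "?U \<in> span2 ?U ?Q" unfolding span2_def
    by (intro CollectI exI[of _ 1] exI[of _ 0]) (auto intro!: eq_matI)
  hence "T * ?U * S \<in> span2 ?U' ?Q'" using im by blast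
  then obtain a b where hU: "T * ?U * S = a \<cdot>\<^sub>m ?U' + b \<cdot>\<^sub>m ?Q'" unfolding span2_def by auto
  have "?Q \<in> span2 ?U ?Q" unfolding span2_def
    by (intro CollectI exI[of _ 0] exI[of _ 1]) (auto intro!: eq_matI)
  hence "T * ?Q * S \<in> span2 ?U' ?Q'" using im by blast
  then obtain c d where hQ: "T * ?Q * S = c \<cdot>\<^sub>m ?U' + d \<cdot>\<^sub>m ?Q'" unfolding span2_def by auto
  have Nn: "0 < 12*n" using n by simp
  have S': "S \<in> carrier_mat (12*n) (12*n)" and T': "T \<in> carrier_mat (12*n) (12*n)"
    and ST': "S * T = 1\<^sub>m (12*n)" and TS': "T * S = 1\<^sub>m (12*n)" using S T ST TS N by auto
  have hU': "T * (1\<^sub>m (12 * n) + PP n A B) * S = a \<cdot>\<^sub>m (1\<^sub>m (12 * n) + PP n A' B') + b \<cdot>\<^sub>m QQ n A' B'"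
    using hU M1_eq[OF A B] M1_eq[OF A' B'] by simp
  have hQ': "T * QQ n A B * S = c \<cdot>\<^sub>m (1\<^sub>m (12 * n) + PP n A' B') + d \<cdot>\<^sub>m QQ n A' B'"
    using hQ M1_eq[OF A' B'] by simp
  have RE0: "Ri 12 n 0 * Ei 12 n 0 = (1\<^sub>m n :: 'a mat)" using Ri_Ei[of 0 12 0 n] by simp
  have RE6: "Ri 12 n 6 * Ei 12 n 6 = (1\<^sub>m n :: 'a mat)" using Ri_Ei[of 6 12 6 n] by simp
  show ?thesis
    by (rule key[OF Nn nc_subst_carrier[OF MP_carrier] nc_subst_carrier[OF MQ_carrier]
          nc_subst_carrier[OF MP_carrier] nc_subst_carrier[OF MQ_carrier] S' T'
          Ei_carrier Ei_carrier Ri_carrier Ri_carrier A B A' B' n ST' TS' hU' hQ'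
          det_PP[OF n A B] det_QQ[OF n A B] det_comb[OF n A' B']
          F2[OF A B] F2[OF A' B'] F3[OF A B] F3[OF A' B'] F4[OF A B] F4[OF A' B']
          F5[OF A B] F5'[OF A' B'] F6[OF A B] F6[OF A' B'] QQ4_ne[OF n A' B'] QQ_ne[OF n A B]
          RE0 RE6])
qed

lemma wild_nonsing: "wild_2space_problem (comm_2space_nonsing :: 'a::field mat \<Rightarrow> 'a mat \<Rightarrow> bool)"
  unfolding wild_2space_problem_def
proof (intro exI conjI allI impI ballI)
  show "(M1 :: 'a ncpoly mat) \<in> carrier_mat 12 12" "(MQ :: 'a ncpoly mat) \<in> carrier_mat 12 12" by auto
  fix n :: nat and A B :: "'a mat"
  assume n: "1 \<le> n" and A: "A \<in> carrier_mat n n" and B: "B \<in> carrier_mat n n"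
  show "comm_2space_nonsing (nc_subst n M1 A B) (nc_subst n MQ A B)" using obj[of n A B] n A B by simp
next
  fix n :: nat and A B A' B' :: "'a mat"
  assume n: "1 \<le> n" and A: "A \<in> carrier_mat n n" and B: "B \<in> carrier_mat n n"
    and A': "A' \<in> carrier_mat n n" and B': "B' \<in> carrier_mat n n"
  show "similar_spaces (nc_subst n M1 A B) (nc_subst n MQ A B) (nc_subst n M1 A' B') (nc_subst n MQ A' B')
     \<longleftrightarrow> similar_pairs n A B A' B'"
    using hard_dir[of n A B A' B'] easy_dir[of n A B A' B'] n A B A' B' by auto
qed

lemma wild_mono:
  assumes "wild_2space_problem Obj" "\<And>P Q. Obj P Q \<Longrightarrow> Obj' P Q"
  shows "wild_2space_problem Obj'"
  using assms unfolding wild_2space_problem_def by meson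

theorem theorem1:
  shows "wild_2space_problem (comm_2space :: 'a::field mat \<Rightarrow> 'a mat \<Rightarrow> bool) \<and>
    (card (UNIV :: 'a set) \<noteq> 2 \<longrightarrow> wild_2space_problem (comm_2space_nonsing :: 'a mat \<Rightarrow> 'a mat \<Rightarrow> bool))"
  using wild_nonsing wild_mono[OF wild_nonsing] unfolding comm_2space_nonsing_def by blast

end
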